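(* In the setting described in the context, for any $a\in\mathfrak{z}$ and any positive integer $n$, $$\mathrm{S}^r(a^n)=\sum_{i=0}^n r^{n-i}(1-r)^i\, a^i\ast \mathrm{S}(a^{n-i}),$$ where $\mathrm{S}=\mathrm{S}^1$. Equivalently, for a formal variable $u$, $\mathrm{S}^r\!\left(\frac{1}{1-au}\right)=\frac{1}{1-a(1-r)u}\ast \mathrm{S}\!\left(\frac{1}{1-aru}\right)$.
   Context: $\mathfrak{A}$ is a commutative $\mathbb{Q}$-algebra, $A$ a set of non-commutative letters, $\mathfrak{h}^1$ the non-commutative polynomial algebra over $\mathfrak{A}$ generated by $A$, and $\mathfrak{z}$ the $\mathfrak{A}$-span of $A$, equipped with a commutative (not necessarily unital) $\mathfrak{A}$-algebra product $\circ$. This acts on $\mathfrak{h}^1$ by $\mathfrak{A}$-linearity and $a\circ 1_w=0$, $a\circ(bw)=(a\circ b)w$ ($a,b\in A$, $w$ a word, $1_w$ the empty word). The harmonic product $\ast$ on $\mathfrak{h}^1$ is the $\mathfrak{A}$-bilinear product with $1_w\ast w=w\ast 1_w=w$ and $aw_1\ast bw_2=a(w_1\ast bw_2)+b(aw_1\ast w_2)+(a\circ b)(w_1\ast w_2)$ for $a,b\in A$ and words $w,w_1,w_2$ (extended $r$-linearly and to formal power series in $u$). For a variable $r$, $\mathrm{S}^r$ is the $\mathfrak{A}[r]$-linear map on $\mathfrak{h}^1[r]$ with $\mathrm{S}^r(1_w)=1_w$ and $\mathrm{S}^r(aw)=a\mathrm{S}^r(w)+r\,a\circ\mathrm{S}^r(w)$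 for $a\in A$ and words $w$; $\mathrm{S}:=\mathrm{S}^1$. Here $a^n$ denotes the $n$-fold concatenation power of $a$ ($a^0=1_w$). *)

theory Defs
  imports "HOL-Library.Poly_Mapping" "HOL-Computational_Algebra.Polynomial"
begin

text \<open>The coefficient ring is a commutative Q-algebra: a commutative ring in which
  every positive integer is invertible.\<close>
definition rat_algebra :: "'k::comm_ring_1 itself \<Rightarrow> bool" where
  "rat_algebra _ \<longleftrightarrow> (\<forall>n::nat. n > 0 \<longrightarrow> (\<exists>x::'k. of_nat n * x = 1))"

text \<open>Non-commutative polynomials over coefficients 'c in letters 'l:
  finitely supported functions on words.\<close>
type_synonym ('l,'c) nc = "'l list \<Rightarrow>\<^sub>0 'c"

definition ncsmult :: "'c::comm_ring_1 \<Rightarrow> ('l,'c) nc \<Rightarrow> ('l,'c) nc" where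
  "ncsmult c p = Poly_Mapping.map (\<lambda>x. c * x) p"

definition linext :: "('l list \<Rightarrow> ('m,'c::comm_ring_1) nc) \<Rightarrow> ('l,'c) nc \<Rightarrow> ('m,'c) nc" where
  "linext F p = (\<Sum>w\<in>Poly_Mapping.keys p. ncsmult (Poly_Mapping.lookup p w) (F w))"

definition word :: "'l list \<Rightarrow> ('l,'c::comm_ring_1) nc" where
  "word w = Poly_Mapping.single w 1"

definition ncmult :: "('l,'c::comm_ring_1) nc \<Rightarrow> ('l,'c) nc \<Rightarrow> ('l,'c) nc" where
  "ncmult p q = (\<Sum>u\<in>Poly_Mapping.keys p. \<Sum>v\<in>Poly_Mapping.keys q. Poly_Mapping.single (u @ v) (Poly_Mapping.lookup p u * Poly_Mapping.lookup q v))"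

primrec ncpow :: "('l,'c::comm_ring_1) nc \<Rightarrow> nat \<Rightarrow> ('l,'c) nc" where
  "ncpow p 0 = word []"
| "ncpow p (Suc n) = ncmult p (ncpow p n)"

text \<open>Elements of the span of the letters (the space z), embedded into h^1.\<close>
definition zemb :: "('l \<Rightarrow>\<^sub>0 'c::comm_ring_1) \<Rightarrow> ('l,'c) nc" where
  "zemb a = (\<Sum>x\<in>Poly_Mapping.keys a. Poly_Mapping.single [x] (Poly_Mapping.lookup a x))"

text \<open>The product on z is given by structure constants g x y = x o y (for letters x, y),
  extended bilinearly.\<close>
definition zprod :: "('l \<Rightarrow> 'l \<Rightarrow> ('l \<Rightarrow>\<^sub>0 'c::comm_ring_1)) \<Rightarrow> ('l \<Rightarrow>\<^sub>0 'c) \<Rightarrow> ('l \<Rightarrow>\<^sub>0 'c) \<Rightarrow> ('l \<Rightarrow>\<^sub>0 'c)" where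
  "zprod g z1 z2 = (\<Sum>x\<in>Poly_Mapping.keys z1. \<Sum>y\<in>Poly_Mapping.keys z2.
      Poly_Mapping.map (\<lambda>c. Poly_Mapping.lookup z1 x * Poly_Mapping.lookup z2 y * c) (g x y))"

definition circ_word :: "('l \<Rightarrow> 'l \<Rightarrow> ('l \<Rightarrow>\<^sub>0 'c::comm_ring_1)) \<Rightarrow> 'l \<Rightarrow> 'l list \<Rightarrow> ('l,'c) nc" where
  "circ_word g a w = (case w of [] \<Rightarrow> 0 | b # w' \<Rightarrow> ncmult (zemb (g a b)) (word w'))"

definition circ_letter :: "('l \<Rightarrow> 'l \<Rightarrow> ('l \<Rightarrow>\<^sub>0 'c::comm_ring_1)) \<Rightarrow> 'l \<Rightarrow> ('l,'c) nc \<Rightarrow> ('l,'c) nc" where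
  "circ_letter g a P = linext (circ_word g a) P"

fun harm_word :: "('l \<Rightarrow> 'l \<Rightarrow> ('l \<Rightarrow>\<^sub>0 'c::comm_ring_1)) \<Rightarrow> 'l list \<Rightarrow> 'l list \<Rightarrow> ('l,'c) nc" where
  "harm_word g [] w = word w"
| "harm_word g w [] = word w"
| "harm_word g (a # u) (b # v) =
     ncmult (word [a]) (harm_word g u (b # v))
   + ncmult (word [b]) (harm_word g (a # u) v)
   + ncmult (zemb (g a b)) (harm_word g u v)"

definition harm :: "('l \<Rightarrow> 'l \<Rightarrow> ('l \<Rightarrow>\<^sub>0 'c::comm_ring_1)) \<Rightarrow> ('l,'c) nc \<Rightarrow> ('l,'c) nc \<Rightarrow> ('l,'c) nc" where
  "harm g p q = linext (\<lambda>u. linext (\<lambda>v. harm_word g u v) q) p"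

fun Sr_word :: "('l \<Rightarrow> 'l \<Rightarrow> ('l \<Rightarrow>\<^sub>0 'c::comm_ring_1)) \<Rightarrow> 'c \<Rightarrow> 'l list \<Rightarrow> ('l,'c) nc" where
  "Sr_word g r [] = word []"
| "Sr_word g r (a # w) = ncmult (word [a]) (Sr_word g r w) + ncsmult r (circ_letter g a (Sr_word g r w))"

definition Sr :: "('l \<Rightarrow> 'l \<Rightarrow> ('l \<Rightarrow>\<^sub>0 'c::comm_ring_1)) \<Rightarrow> 'c \<Rightarrow> ('l,'c) nc \<Rightarrow> ('l,'c) nc" where
  "Sr g r = linext (Sr_word g r)"

text \<open>Extension of scalars from A to A[r] (constant polynomials).\<close>
definition liftc :: "('l \<Rightarrow>\<^sub>0 'k::comm_ring_1) \<Rightarrow> ('l \<Rightarrow>\<^sub>0 'k poly)" where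
  "liftc z = Poly_Mapping.map (\<lambda>c. [:c:]) z"

end

theory Submission
  imports Defs
begin

abbreviation lk where "lk \<equiv> Poly_Mapping.lookup"
abbreviation ks where "ks \<equiv> Poly_Mapping.keys"
abbreviation sg where "sg \<equiv> Poly_Mapping.single"

definition sm :: "'c::comm_ring_1 \<Rightarrow> ('a \<Rightarrow>\<^sub>0 'c) \<Rightarrow> ('a \<Rightarrow>\<^sub>0 'c)" where
  "sm c p = Poly_Mapping.map (\<lambda>x. c * x) p"

lemma lookup_map0: "f 0 = 0 \<Longrightarrow> lk (Poly_Mapping.map f p) k = f (lk p k)"
  by (simp add: Poly_Mapping.map.rep_eq when_def)

lemma lookup_sm [simp]: "lk (sm c p) k = c * lk p k"
  by (simp add: sm_def lookup_map0)

lemma sm_add_right: "sm c (p + q) = sm c p + sm c q"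
  by (rule poly_mapping_eqI) (simp add: lookup_add algebra_simps)
lemma sm_add_left: "sm (c + d) p = sm c p + sm d p"
  by (rule poly_mapping_eqI) (simp add: lookup_add algebra_simps)
lemma sm_sm [simp]: "sm c (sm d p) = sm (c * d) p"
  by (rule poly_mapping_eqI) (simp add: algebra_simps)
lemma sm_one [simp]: "sm 1 p = p"
  by (rule poly_mapping_eqI) simp
lemma sm_zero_left [simp]: "sm 0 p = 0"
  by (rule poly_mapping_eqI) simp
lemma sm_zero_right [simp]: "sm c 0 = 0"
  by (rule poly_mapping_eqI) simp
lemma sm_single [simp]: "sm c (sg k d) = sg k (c * d)"
  by (rule poly_mapping_eqI) (simp add: lookup_single when_def)
lemma sm_sum_right: "sm c (sum f I) = (\<Sum>i\<in>I. sm c (f i))"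
  by (induction I rule: infinite_finite_induct) (auto simp: sm_add_right)
lemma sm_sum_left: "sm (sum f I) p = (\<Sum>i\<in>I. sm (f i) p)"
  by (induction I rule: infinite_finite_induct) (auto simp: sm_add_left)
lemma keys_sm: "ks (sm c p) \<subseteq> ks p"
  by (auto simp: in_keys_iff)

definition lx :: "('a \<Rightarrow> ('b \<Rightarrow>\<^sub>0 'c::comm_ring_1)) \<Rightarrow> ('a \<Rightarrow>\<^sub>0 'c) \<Rightarrow> ('b \<Rightarrow>\<^sub>0 'c)" where
  "lx F p = (\<Sum>w\<in>ks p. sm (lk p w) (F w))"

lemma lx_superset: "finite S \<Longrightarrow> ks p \<subseteq> S \<Longrightarrow> lx F p = (\<Sum>w\<in>S. sm (lk p w) (F w))"
  unfolding lx_def by (rule sum.mono_neutral_left) (auto simp: in_keys_iff)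

lemma lx_add: "lx F (p + q) = lx F p + lx F q"
proof -
  have f: "finite (ks p \<union> ks q)" by simp
  have "lx F (p + q) = (\<Sum>w\<in>ks p \<union> ks q. sm (lk (p+q) w) (F w))"
    by (rule lx_superset[OF f keys_add])
  also have "\<dots> = (\<Sum>w\<in>ks p \<union> ks q. sm (lk p w) (F w)) + (\<Sum>w\<in>ks p \<union> ks q. sm (lk q w) (F w))"
    by (simp add: lookup_add sm_add_left sum.distrib)
  also have "\<dots> = lx F p + lx F q"
    by (simp add: lx_superset[OF f])
  finally show ?thesis .
qed

lemma lx_sm: "lx F (sm c p) = sm c (lx F p)"
proof -
  have "lx F (sm c p) = (\<Sum>w\<in>ks p. sm (lk (sm c p) w) (F w))"
    by (rule lx_superset[OF finite_keys keys_sm])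
  then show ?thesis by (simp add: lx_def sm_sum_right)
qed

lemma lx_single [simp]: "lx F (sg k c) = sm c (F k)"
  by (simp add: lx_def)

lemma lx_fun_add: "lx (\<lambda>w. F w + G w) p = lx F p + lx G p"
  by (simp add: lx_def sm_add_right sum.distrib)

lemma lx_fun_sm: "lx (\<lambda>w. sm c (F w)) p = sm c (lx F p)"
  by (simp add: lx_def sm_sum_right mult.commute)

definition lin :: "(('a \<Rightarrow>\<^sub>0 'c::comm_ring_1) \<Rightarrow> ('b \<Rightarrow>\<^sub>0 'c)) \<Rightarrow> bool" where
  "lin F \<longleftrightarrow> (\<forall>p q. F (p + q) = F p + F q) \<and> (\<forall>c p. F (sm c p) = sm c (F p))"

lemma linD: "lin F \<Longrightarrow> F (p + q) = F p + F q" "lin F \<Longrightarrow> F (sm c p) = sm c (F p)"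
  by (auto simp: lin_def)

lemma lin_zero: "lin F \<Longrightarrow> F 0 = 0"
  using linD(2)[of F 0 0] by simp

lemma lin_sum: "lin F \<Longrightarrow> F (sum f I) = (\<Sum>i\<in>I. F (f i))"
  by (induction I rule: infinite_finite_induct) (auto simp: lin_zero linD)

lemma expand: "p = lx (\<lambda>k. sg k 1) p"
proof (rule poly_mapping_eqI)
  fix k
  show "lk p k = lk (lx (\<lambda>k. sg k 1) p) k"
    by (simp add: lx_def lookup_sum lookup_single when_def in_keys_iff)
qed

lemma lin_lx_eq: assumes "lin F" shows "F p = lx (\<lambda>k. F (sg k 1)) p"
proof -
  have "F p = F (lx (\<lambda>k. sg k 1) p)" by (rule arg_cong[OF expand])
  also have "\<dots> = lx (\<lambda>k. F (sg k 1)) p"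
    unfolding lx_def by (simp only: lin_sum[OF assms] linD[OF assms])
  finally show ?thesis .
qed

lemma lin_ext: "lin F \<Longrightarrow> lin G \<Longrightarrow> (\<And>k. F (sg k 1) = G (sg k 1)) \<Longrightarrow> F = G"
proof (rule ext)
  fix p
  assume a: "lin F" "lin G" "\<And>k. F (sg k 1) = G (sg k 1)"
  show "F p = G p" using lin_lx_eq[OF a(1), of p] lin_lx_eq[OF a(2), of p] a(3) by simp
qed

lemma lin_lx: "lin (lx F)"
  by (simp add: lin_def lx_add lx_sm)

lemma lin_id: "lin (\<lambda>x. x)"
  by (simp add: lin_def)
lemma lin_add: "lin F \<Longrightarrow> lin G \<Longrightarrow> lin (\<lambda>x. F x + G x)"
  by (simp add: lin_def sm_add_right)
lemma lin_smc: "lin F \<Longrightarrow> lin (\<lambda>x. sm c (F x))"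
  by (simp add: lin_def sm_add_right mult.commute)
lemma lin_comp: "lin F \<Longrightarrow> lin G \<Longrightarrow> lin (\<lambda>x. F (G x))"
  by (simp add: lin_def)

definition B :: "('a \<Rightarrow> 'b \<Rightarrow> ('d \<Rightarrow>\<^sub>0 'c::comm_ring_1)) \<Rightarrow> ('a \<Rightarrow>\<^sub>0 'c) \<Rightarrow> ('b \<Rightarrow>\<^sub>0 'c) \<Rightarrow> ('d \<Rightarrow>\<^sub>0 'c)" where
  "B K p q = lx (\<lambda>u. lx (K u) q) p"

lemma lin_B1: "lin (\<lambda>p. B K p q)"
  by (simp add: B_def lin_lx)
lemma lin_B2: "lin (\<lambda>q. B K p q)"
  by (simp add: B_def lin_def lx_add lx_sm lx_fun_add lx_fun_sm)
lemma B_single [simp]: "B K (sg u c) (sg v d) = sm (c * d) (K u v)"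
  by (simp add: B_def lx_fun_sm mult.commute)


lemma ncsmult_sm: "ncsmult c p = sm c p"
  by (simp add: ncsmult_def sm_def)
lemma linext_lx: "linext F p = lx F p"
  by (simp add: linext_def lx_def ncsmult_sm)
lemma ncmult_B: "ncmult p q = B (\<lambda>u v. word (u @ v)) p q"
  by (simp add: ncmult_def B_def lx_def sm_sum_right word_def mult.commute)
lemma harm_B: "harm g p q = B (harm_word g) p q"
  by (simp add: harm_def B_def linext_lx)
lemma zemb_lx: "zemb a = lx (\<lambda>x. word [x]) a"
  by (simp add: zemb_def lx_def word_def)
lemma map_mult2: "Poly_Mapping.map (\<lambda>c. x * y * c) p = sm x (sm y p)"
  by (rule poly_mapping_eqI) (simp add: lookup_map0 mult.assoc)
lemma zprod_B: "zprod g p q = B g p q"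
  by (simp add: zprod_def B_def lx_def sm_sum_right map_mult2)
lemma Sr_lx: "Sr g r = lx (Sr_word g r)"
  by (simp add: Sr_def linext_lx[abs_def])

definition circ :: "('l \<Rightarrow> 'l \<Rightarrow> ('l \<Rightarrow>\<^sub>0 'c::comm_ring_1)) \<Rightarrow> ('l \<Rightarrow>\<^sub>0 'c) \<Rightarrow> ('l,'c) nc \<Rightarrow> ('l,'c) nc" where
  "circ g b Y = B (circ_word g) b Y"

lemma circ_letter_circ: "circ_letter g x Y = circ g (sg x 1) Y"
  by (simp add: circ_letter_def circ_def B_def linext_lx)

lemma lin_ncmult1: "lin F \<Longrightarrow> lin (\<lambda>x. ncmult (F x) q)"
  unfolding ncmult_B by (rule lin_comp[OF lin_B1])
lemma lin_ncmult2: "lin F \<Longrightarrow> lin (\<lambda>x. ncmult p (F x))"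
  unfolding ncmult_B by (rule lin_comp[OF lin_B2])
lemma lin_harm1: "lin F \<Longrightarrow> lin (\<lambda>x. harm g (F x) q)"
  unfolding harm_B by (rule lin_comp[OF lin_B1])
lemma lin_harm2: "lin F \<Longrightarrow> lin (\<lambda>x. harm g p (F x))"
  unfolding harm_B by (rule lin_comp[OF lin_B2])
lemma lin_zprod1: "lin F \<Longrightarrow> lin (\<lambda>x. zprod g (F x) q)"
  unfolding zprod_B by (rule lin_comp[OF lin_B1])
lemma lin_zprod2: "lin F \<Longrightarrow> lin (\<lambda>x. zprod g p (F x))"
  unfolding zprod_B by (rule lin_comp[OF lin_B2])
lemma lin_circ1: "lin F \<Longrightarrow> lin (\<lambda>x. circ g (F x) q)"
  unfolding circ_def by (rule lin_comp[OF lin_B1])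
lemma lin_circ2: "lin F \<Longrightarrow> lin (\<lambda>x. circ g p (F x))"
  unfolding circ_def by (rule lin_comp[OF lin_B2])
lemma lin_zemb: "lin F \<Longrightarrow> lin (\<lambda>x. zemb (F x))"
  unfolding zemb_lx by (rule lin_comp[OF lin_lx])
lemma lin_Sr: "lin F \<Longrightarrow> lin (\<lambda>x. Sr g r (F x))"
  unfolding Sr_lx by (rule lin_comp[OF lin_lx])

lemmas lin_intros = lin_id lin_add lin_smc lin_ncmult2 lin_ncmult1 lin_harm2 lin_harm1
  lin_zprod2 lin_zprod1 lin_circ2 lin_circ1 lin_zemb lin_Sr

lemma ncmult_words [simp]: "ncmult (word u) (word v) = word (u @ v)"
  by (simp add: ncmult_B word_def)
lemma zemb_single [simp]: "zemb (sg x 1) = word [x]"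
  by (simp add: zemb_lx)
lemma Sr_word' [simp]: "Sr g r (word w) = Sr_word g r w"
  by (simp add: Sr_lx word_def)
lemma harm_words [simp]: "harm g (word u) (word v) = harm_word g u v"
  by (simp add: harm_B word_def)
lemma zprod_singles [simp]: "zprod g (sg x 1) (sg y 1) = g x y"
  by (simp add: zprod_B)
lemma circ_single_word [simp]: "circ g (sg x 1) (word w) = circ_word g x w"
  by (simp add: circ_def word_def)

lemma L1: "Sr g r (ncmult (zemb b) X) = ncmult (zemb b) (Sr g r X) + sm r (circ g b (Sr g r X))"
proof -
  have "(\<lambda>X. Sr g r (ncmult (zemb b) X)) = (\<lambda>X. ncmult (zemb b) (Sr g r X) + sm r (circ g b (Sr g r X)))"
  proof (rule lin_ext)
    show "lin (\<lambda>X. Sr g r (ncmult (zemb b) X))" by (intro lin_intros)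
    show "lin (\<lambda>X. ncmult (zemb b) (Sr g r X) + sm r (circ g b (Sr g r X)))" by (intro lin_intros)
    fix w
    have "(\<lambda>b. Sr g r (ncmult (zemb b) (sg w 1))) = (\<lambda>b. ncmult (zemb b) (Sr g r (sg w 1)) + sm r (circ g b (Sr g r (sg w 1))))"
    proof (rule lin_ext)
      show "lin (\<lambda>b. Sr g r (ncmult (zemb b) (sg w 1)))" by (intro lin_intros)
      show "lin (\<lambda>b. ncmult (zemb b) (Sr g r (sg w 1)) + sm r (circ g b (Sr g r (sg w 1))))" by (intro lin_intros)
      fix x
      show "Sr g r (ncmult (zemb (sg x 1)) (sg w 1)) = ncmult (zemb (sg x 1)) (Sr g r (sg w 1)) + sm r (circ g (sg x 1) (Sr g r (sg w 1)))"
        using Sr_word'[of g r "x # w"] by (simp add: circ_letter_circ ncsmult_sm flip: word_def)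
    qed
    then show "Sr g r (ncmult (zemb b) (sg w 1)) = ncmult (zemb b) (Sr g r (sg w 1)) + sm r (circ g b (Sr g r (sg w 1)))"
      by (rule fun_cong)
  qed
  then show ?thesis by (rule fun_cong)
qed


lemma lin_ext': "lin F \<Longrightarrow> lin G \<Longrightarrow> (\<And>k. F (sg k 1) = G (sg k 1)) \<Longrightarrow> F x = G x"
  using lin_ext by metis

lemma L2: "circ g b (ncmult (zemb c) X) = ncmult (zemb (zprod g b c)) X"
proof (rule lin_ext'[of "\<lambda>X. circ g b (ncmult (zemb c) X)" "\<lambda>X. ncmult (zemb (zprod g b c)) X"])
  show "lin (\<lambda>X. circ g b (ncmult (zemb c) X))" by (intro lin_intros)
  show "lin (\<lambda>X. ncmult (zemb (zprod g b c)) X)" by (intro lin_intros)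
  fix w
  show "circ g b (ncmult (zemb c) (sg w 1)) = ncmult (zemb (zprod g b c)) (sg w 1)"
  proof (rule lin_ext'[of "\<lambda>c. circ g b (ncmult (zemb c) (sg w 1))" "\<lambda>c. ncmult (zemb (zprod g b c)) (sg w 1)"])
    show "lin (\<lambda>c. circ g b (ncmult (zemb c) (sg w 1)))" by (intro lin_intros)
    show "lin (\<lambda>c. ncmult (zemb (zprod g b c)) (sg w 1))" by (intro lin_intros)
    fix y
    show "circ g b (ncmult (zemb (sg y 1)) (sg w 1)) = ncmult (zemb (zprod g b (sg y 1))) (sg w 1)"
    proof (rule lin_ext'[of "\<lambda>b. circ g b (ncmult (zemb (sg y 1)) (sg w 1))" "\<lambda>b. ncmult (zemb (zprod g b (sg y 1))) (sg w 1)"])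
      show "lin (\<lambda>b. circ g b (ncmult (zemb (sg y 1)) (sg w 1)))" by (intro lin_intros)
      show "lin (\<lambda>b. ncmult (zemb (zprod g b (sg y 1))) (sg w 1))" by (intro lin_intros)
      fix x
      show "circ g (sg x 1) (ncmult (zemb (sg y 1)) (sg w 1)) = ncmult (zemb (zprod g (sg x 1) (sg y 1))) (sg w 1)"
        using circ_single_word[of g x "y # w"] by (simp add: circ_word_def flip: word_def)
    qed
  qed
qed

lemma L3: "harm g (ncmult (zemb b) U) (ncmult (zemb c) V) =
   ncmult (zemb b) (harm g U (ncmult (zemb c) V)) + ncmult (zemb c) (harm g (ncmult (zemb b) U) V)
   + ncmult (zemb (zprod g b c)) (harm g U V)"
proof (rule lin_ext'[of "\<lambda>V. harm g (ncmult (zemb b) U) (ncmult (zemb c) V)" "\<lambda>V. ncmult (zemb b) (harm g U (ncmult (zemb c) V)) + ncmult (zemb c) (harm g (ncmult (zemb b) U) V)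
   + ncmult (zemb (zprod g b c)) (harm g U V)"])
  show "lin (\<lambda>V. harm g (ncmult (zemb b) U) (ncmult (zemb c) V))" by (intro lin_intros)
  show "lin (\<lambda>V. ncmult (zemb b) (harm g U (ncmult (zemb c) V)) + ncmult (zemb c) (harm g (ncmult (zemb b) U) V)
   + ncmult (zemb (zprod g b c)) (harm g U V))" by (intro lin_intros)
  fix v
  show "harm g (ncmult (zemb b) U) (ncmult (zemb c) (sg v 1)) =
   ncmult (zemb b) (harm g U (ncmult (zemb c) (sg v 1))) + ncmult (zemb c) (harm g (ncmult (zemb b) U) (sg v 1))
   + ncmult (zemb (zprod g b c)) (harm g U (sg v 1))"
  proof (rule lin_ext'[of "\<lambda>U. harm g (ncmult (zemb b) U) (ncmult (zemb c) (sg v 1))" "\<lambda>U. ncmult (zemb b) (harm g U (ncmult (zemb c) (sg v 1))) + ncmult (zemb c) (harm g (ncmult (zemb b) U) (sg v 1))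
   + ncmult (zemb (zprod g b c)) (harm g U (sg v 1))"])
    show "lin (\<lambda>U. harm g (ncmult (zemb b) U) (ncmult (zemb c) (sg v 1)))" by (intro lin_intros)
    show "lin (\<lambda>U. ncmult (zemb b) (harm g U (ncmult (zemb c) (sg v 1))) + ncmult (zemb c) (harm g (ncmult (zemb b) U) (sg v 1))
     + ncmult (zemb (zprod g b c)) (harm g U (sg v 1)))" by (intro lin_intros)
    fix u
    show "harm g (ncmult (zemb b) (sg u 1)) (ncmult (zemb c) (sg v 1)) =
     ncmult (zemb b) (harm g (sg u 1) (ncmult (zemb c) (sg v 1))) + ncmult (zemb c) (harm g (ncmult (zemb b) (sg u 1)) (sg v 1))
     + ncmult (zemb (zprod g b c)) (harm g (sg u 1) (sg v 1))"
    proof (rule lin_ext'[of "\<lambda>c. harm g (ncmult (zemb b) (sg u 1)) (ncmult (zemb c) (sg v 1))" "\<lambda>c. ncmult (zemb b) (harm g (sg u 1) (ncmult (zemb c) (sg v 1))) + ncmult (zemb c) (harm g (ncmult (zemb b) (sg u 1)) (sg v 1))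
     + ncmult (zemb (zprod g b c)) (harm g (sg u 1) (sg v 1))"])
      show "lin (\<lambda>c. harm g (ncmult (zemb b) (sg u 1)) (ncmult (zemb c) (sg v 1)))" by (intro lin_intros)
      show "lin (\<lambda>c. ncmult (zemb b) (harm g (sg u 1) (ncmult (zemb c) (sg v 1))) + ncmult (zemb c) (harm g (ncmult (zemb b) (sg u 1)) (sg v 1))
       + ncmult (zemb (zprod g b c)) (harm g (sg u 1) (sg v 1)))" by (intro lin_intros)
      fix y
      show "harm g (ncmult (zemb b) (sg u 1)) (ncmult (zemb (sg y 1)) (sg v 1)) =
       ncmult (zemb b) (harm g (sg u 1) (ncmult (zemb (sg y 1)) (sg v 1))) + ncmult (zemb (sg y 1)) (harm g (ncmult (zemb b) (sg u 1)) (sg v 1))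
       + ncmult (zemb (zprod g b (sg y 1))) (harm g (sg u 1) (sg v 1))"
      proof (rule lin_ext'[of "\<lambda>b. harm g (ncmult (zemb b) (sg u 1)) (ncmult (zemb (sg y 1)) (sg v 1))" "\<lambda>b. ncmult (zemb b) (harm g (sg u 1) (ncmult (zemb (sg y 1)) (sg v 1))) + ncmult (zemb (sg y 1)) (harm g (ncmult (zemb b) (sg u 1)) (sg v 1))
       + ncmult (zemb (zprod g b (sg y 1))) (harm g (sg u 1) (sg v 1))"])
        show "lin (\<lambda>b. harm g (ncmult (zemb b) (sg u 1)) (ncmult (zemb (sg y 1)) (sg v 1)))" by (intro lin_intros)
        show "lin (\<lambda>b. ncmult (zemb b) (harm g (sg u 1) (ncmult (zemb (sg y 1)) (sg v 1))) + ncmult (zemb (sg y 1)) (harm g (ncmult (zemb b) (sg u 1)) (sg v 1))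
         + ncmult (zemb (zprod g b (sg y 1))) (harm g (sg u 1) (sg v 1)))" by (intro lin_intros)
        fix x
        show "harm g (ncmult (zemb (sg x 1)) (sg u 1)) (ncmult (zemb (sg y 1)) (sg v 1)) =
         ncmult (zemb (sg x 1)) (harm g (sg u 1) (ncmult (zemb (sg y 1)) (sg v 1))) + ncmult (zemb (sg y 1)) (harm g (ncmult (zemb (sg x 1)) (sg u 1)) (sg v 1))
         + ncmult (zemb (zprod g (sg x 1) (sg y 1))) (harm g (sg u 1) (sg v 1))"
          using harm_words[of g "x # u" "y # v"] by (simp flip: word_def)
      qed
    qed
  qed
qed


lemma lin_0: "lin (\<lambda>x. 0)"
  by (simp add: lin_def)

lemma harm_unit_left [simp]: "harm g (word []) q = q"
proof (rule lin_ext'[of "\<lambda>q. harm g (word []) q" "\<lambda>q. q"])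
  show "lin (harm g (word []))" by (intro lin_intros)
  show "lin (\<lambda>q. q)" by (rule lin_id)
  fix k show "harm g (word []) (sg k 1) = sg k 1"
    using harm_words[of g "[]" k] by (simp flip: word_def)
qed

lemma harm_unit_right [simp]: "harm g p (word []) = p"
proof (rule lin_ext'[of "\<lambda>p. harm g p (word [])" "\<lambda>p. p"])
  show "lin (\<lambda>p. harm g p (word []))" by (intro lin_intros)
  show "lin (\<lambda>q. q)" by (rule lin_id)
  fix k show "harm g (sg k 1) (word []) = sg k 1"
    using harm_words[of g k "[]"] by (cases k) (simp_all flip: word_def)
qed

lemma circ_nil [simp]: "circ g b (word []) = 0"
proof (rule lin_ext'[of "\<lambda>b. circ g b (word [])" "\<lambda>b. 0"])
  show "lin (\<lambda>b. circ g b (word []))" by (intro lin_intros)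
  show "lin (\<lambda>b. 0)" by (rule lin_0)
  fix k show "circ g (sg k 1) (word []) = 0"
    by (simp add: circ_word_def)
qed

primrec cz :: "('l \<Rightarrow> 'l \<Rightarrow> ('l \<Rightarrow>\<^sub>0 'c::comm_ring_1)) \<Rightarrow> ('l \<Rightarrow>\<^sub>0 'c) \<Rightarrow> nat \<Rightarrow> ('l \<Rightarrow>\<^sub>0 'c)" where
  "cz g a 0 = a"
| "cz g a (Suc k) = zprod g a (cz g a k)"

lemma Prec: "Sr g r (ncpow (zemb a) (Suc n)) =
  (\<Sum>k\<le>n. sm (r ^ k) (ncmult (zemb (cz g a k)) (Sr g r (ncpow (zemb a) (n - k)))))"
proof (induction n)
  case 0
  show ?case using L1[of g r a "word []"] by simp
next
  case (Suc n)
  let ?P = "\<lambda>n. Sr g r (ncpow (zemb a) n)"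
  let ?Z = "\<lambda>k X. ncmult (zemb (cz g a k)) X"
  have lc: "lin (circ g a)" by (intro lin_intros)
  have "?P (Suc (Suc n)) = ?Z 0 (?P (Suc n)) + sm r (circ g a (?P (Suc n)))"
    using L1[of g r a "ncpow (zemb a) (Suc n)"] by simp
  also have "circ g a (?P (Suc n)) = (\<Sum>k\<le>n. sm (r ^ k) (?Z (Suc k) (?P (n - k))))"
    unfolding Suc.IH by (simp add: lin_sum[OF lc] linD[OF lc] L2)
  also have "sm r \<dots> = (\<Sum>k\<le>n. sm (r ^ Suc k) (?Z (Suc k) (?P (Suc n - Suc k))))"
    by (simp add: sm_sum_right)
  also have "?Z 0 (?P (Suc n)) + \<dots> = (\<Sum>k\<le>Suc n. sm (r ^ k) (?Z k (?P (Suc n - k))))"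
    by (subst sum.atMost_Suc_shift) simp
  finally show ?case .
qed


definition Hh where "Hh g a i m = harm g (ncpow (zemb a) i) (Sr g 1 (ncpow (zemb a) m))"
definition Yy where "Yy g a i m = (\<Sum>k\<le>m. ncmult (zemb (cz g a k)) (Hh g a i (m - k)))"

lemma Qrec: "Sr g 1 (ncpow (zemb a) (Suc n)) =
  (\<Sum>k\<le>n. ncmult (zemb (cz g a k)) (Sr g 1 (ncpow (zemb a) (n - k))))"
  using Prec[of g 1 a n] by simp

lemma H0: "Hh g a 0 (Suc m) = Yy g a 0 m"
  unfolding Hh_def Qrec by (simp add: Yy_def Hh_def)

lemma H1: "Hh g a (Suc i) 0 = Yy g a i 0"
  by (simp add: Hh_def Yy_def)

lemma H2: "Hh g a (Suc i) (Suc m) = Yy g a (Suc i) m + Yy g a i (Suc m)"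
proof -
  let ?W = "\<lambda>n. ncpow (zemb a) n"
  let ?Q = "\<lambda>n. Sr g 1 (ncpow (zemb a) n)"
  let ?Z = "\<lambda>k X. ncmult (zemb (cz g a k)) X"
  have lh: "lin (harm g (ncmult (zemb a) (?W i)))" by (intro lin_intros)
  have lh2: "lin (harm g (?W i))" by (intro lin_intros)
  have lz: "lin (ncmult (zemb a))" by (intro lin_intros)
  have "Hh g a (Suc i) (Suc m) = (\<Sum>k\<le>m. harm g (ncmult (zemb a) (?W i)) (?Z k (?Q (m - k))))"
    unfolding Hh_def Qrec by (simp add: lin_sum[OF lh])
  also have "\<dots> = (\<Sum>k\<le>m. ?Z 0 (harm g (?W i) (?Z k (?Q (m - k)))) + ?Z k (Hh g a (Suc i) (m - k))
      + ?Z (Suc k) (Hh g a i (m - k)))"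
    by (rule sum.cong) (simp_all add: L3 Hh_def)
  also have "\<dots> = ?Z 0 (Hh g a i (Suc m)) + Yy g a (Suc i) m + (\<Sum>k\<le>m. ?Z (Suc k) (Hh g a i (m - k)))"
    unfolding Yy_def Hh_def Qrec by (simp add: sum.distrib lin_sum[OF lz] lin_sum[OF lh2])
  also have "?Z 0 (Hh g a i (Suc m)) + (\<Sum>k\<le>m. ?Z (Suc k) (Hh g a i (m - k))) = Yy g a i (Suc m)"
    unfolding Yy_def by (subst sum.atMost_Suc_shift) simp
  ultimately show ?thesis by (simp add: algebra_simps)
qed

lemma Hs: "j \<le> n \<Longrightarrow> Hh g a (Suc j) (n - j) = Yy g a j (n - j) + (if j < n then Yy g a (Suc j) (n - Suc j) else 0)"
proof (cases "j < n")
  case True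
  then have "n - j = Suc (n - Suc j)" by simp
  then show ?thesis using True H2[of g a j "n - Suc j"] by (simp add: add.commute)
next
  case False
  moreover assume "j \<le> n"
  ultimately have "n - j = 0" by simp
  then show ?thesis using H1[of g a j] by simp
qed


lemma tri_swap: "(\<Sum>k\<le>n. \<Sum>j\<le>n - k. f k j) = (\<Sum>j\<le>(n::nat). \<Sum>k\<le>n - j. f k j)"
proof -
  have "(\<Sum>k\<le>n. \<Sum>j\<le>n - k. f k j) = (\<Sum>k\<in>{..n}. \<Sum>j\<in>{j. j \<in> {..n} \<and> k + j \<le> n}. f k j)"
    by (rule sum.cong) (simp, rule sum.cong, auto)
  also have "\<dots> = (\<Sum>j\<in>{..n}. \<Sum>k\<in>{k. k \<in> {..n} \<and> k + j \<le> n}. f k j)"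
    by (rule sum.swap_restrict) auto
  also have "\<dots> = (\<Sum>j\<le>n. \<Sum>k\<le>n - j. f k j)"
    by (rule sum.cong) (simp, rule sum.cong, auto)
  finally show ?thesis .
qed

definition Tt where "Tt g a r n = (\<Sum>i\<le>n. sm (r ^ (n - i) * (1 - r) ^ i) (Hh g a i (n - i)))"

lemma Trec: "Tt g a r (Suc n) = (\<Sum>k\<le>n. sm (r ^ k) (ncmult (zemb (cz g a k)) (Tt g a r (n - k))))"
proof -
  let ?s = "1 - r"
  let ?Z = "\<lambda>k X. ncmult (zemb (cz g a k)) X"
  let ?c = "\<lambda>j. r ^ (n - j) * ?s ^ j"
  have lz: "\<And>k. lin (?Z k)" by (intro lin_intros)
  have "(\<Sum>k\<le>n. sm (r ^ k) (?Z k (Tt g a r (n - k))))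
      = (\<Sum>k\<le>n. \<Sum>j\<le>n - k. sm (?c j) (?Z k (Hh g a j (n - k - j))))"
  proof (rule sum.cong)
    fix k assume k: "k \<in> {..n}"
    have "sm (r ^ k) (?Z k (Tt g a r (n - k))) = (\<Sum>j\<le>n - k. sm (r ^ k * (r ^ (n - k - j) * ?s ^ j)) (?Z k (Hh g a j (n - k - j))))"
      unfolding Tt_def by (simp add: lin_sum[OF lz] linD[OF lz] sm_sum_right)
    also have "\<dots> = (\<Sum>j\<le>n - k. sm (?c j) (?Z k (Hh g a j (n - k - j))))"
    proof (rule sum.cong)
      fix j assume "j \<in> {..n - k}"
      then have "k + (n - k - j) = n - j" using k by auto
      then have "r ^ k * (r ^ (n - k - j) * ?s ^ j) = ?c j"
        by (metis mult.assoc power_add)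
      then show "sm (r ^ k * (r ^ (n - k - j) * ?s ^ j)) (?Z k (Hh g a j (n - k - j))) = sm (?c j) (?Z k (Hh g a j (n - k - j)))"
        by simp
    qed simp
    finally show "sm (r ^ k) (?Z k (Tt g a r (n - k))) = (\<Sum>j\<le>n - k. sm (?c j) (?Z k (Hh g a j (n - k - j))))" .
  qed simp
  also have "\<dots> = (\<Sum>j\<le>n. \<Sum>k\<le>n - j. sm (?c j) (?Z k (Hh g a j (n - k - j))))"
    by (rule tri_swap)
  also have "\<dots> = (\<Sum>j\<le>n. sm (?c j) (Yy g a j (n - j)))"
    by (rule sum.cong) (simp_all add: Yy_def sm_sum_right diff_commute add.commute)
  finally have R: "(\<Sum>k\<le>n. sm (r ^ k) (?Z k (Tt g a r (n - k)))) = (\<Sum>j\<le>n. sm (?c j) (Yy g a j (n - j)))" .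

  have "Tt g a r (Suc n) = sm (r ^ Suc n) (Hh g a 0 (Suc n))
      + (\<Sum>j\<le>n. sm (r ^ (n - j) * ?s ^ Suc j) (Hh g a (Suc j) (n - j)))"
    unfolding Tt_def by (subst sum.atMost_Suc_shift) simp
  also have "\<dots> = sm (r ^ Suc n) (Yy g a 0 n)
      + (\<Sum>j\<le>n. sm (r ^ (n - j) * ?s ^ Suc j) (Yy g a j (n - j)))
      + (\<Sum>j\<le>n. if j < n then sm (r ^ (n - j) * ?s ^ Suc j) (Yy g a (Suc j) (n - Suc j)) else 0)"
  proof -
    have S: "\<And>j. j \<in> {..n} \<Longrightarrow> sm (r ^ (n - j) * ?s ^ Suc j) (Hh g a (Suc j) (n - j))
       = sm (r ^ (n - j) * ?s ^ Suc j) (Yy g a j (n - j))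
         + (if j < n then sm (r ^ (n - j) * ?s ^ Suc j) (Yy g a (Suc j) (n - Suc j)) else 0)"
      by (simp add: Hs sm_add_right)
    show ?thesis by (simp only: H0 sum.cong[OF refl S] sum.distrib add.assoc)
  qed
  also have "(\<Sum>j\<le>n. if j < n then sm (r ^ (n - j) * ?s ^ Suc j) (Yy g a (Suc j) (n - Suc j)) else 0)
      = (\<Sum>j<n. sm (r ^ (n - j) * ?s ^ Suc j) (Yy g a (Suc j) (n - Suc j)))"
    unfolding lessThan_Suc_atMost[symmetric] by (simp add: sum.lessThan_Suc)
  also have "sm (r ^ Suc n) (Yy g a 0 n)
      + (\<Sum>j\<le>n. sm (r ^ (n - j) * ?s ^ Suc j) (Yy g a j (n - j)))
      + (\<Sum>j<n. sm (r ^ (n - j) * ?s ^ Suc j) (Yy g a (Suc j) (n - Suc j)))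
      = (\<Sum>j\<le>n. sm (r ^ (Suc n - j) * ?s ^ j) (Yy g a j (n - j)))
      + (\<Sum>j\<le>n. sm (r ^ (n - j) * ?s ^ Suc j) (Yy g a j (n - j)))"
    by (subst (2) sum.atMost_shift) (simp add: algebra_simps)
  also have "\<dots> = (\<Sum>j\<le>n. sm (?c j) (Yy g a j (n - j)))"
    unfolding sum.distrib[symmetric]
  proof (rule sum.cong)
    fix j assume "j \<in> {..n}"
    then have "Suc n - j = Suc (n - j)" by auto
    then have "r ^ (Suc n - j) * ?s ^ j + r ^ (n - j) * ?s ^ Suc j = ?c j"
      by (simp add: algebra_simps)
    then show "sm (r ^ (Suc n - j) * ?s ^ j) (Yy g a j (n - j)) + sm (r ^ (n - j) * ?s ^ Suc j) (Yy g a j (n - j))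
        = sm (?c j) (Yy g a j (n - j))"
      by (simp flip: sm_add_left)
  qed simp
  finally show ?thesis using R by simp
qed

lemma main_gen: "Sr g r (ncpow (zemb a) n) = Tt g a r n"
proof (induction n rule: less_induct)
  case (less n)
  show ?case
  proof (cases n)
    case 0
    then show ?thesis by (simp add: Tt_def Hh_def)
  next
    case (Suc m)
    have "Sr g r (ncpow (zemb a) n) = (\<Sum>k\<le>m. sm (r ^ k) (ncmult (zemb (cz g a k)) (Sr g r (ncpow (zemb a) (m - k)))))"
      unfolding Suc by (rule Prec)
    also have "\<dots> = (\<Sum>k\<le>m. sm (r ^ k) (ncmult (zemb (cz g a k)) (Tt g a r (m - k))))"
      by (rule sum.cong) (simp_all add: less.IH Suc)
    also have "\<dots> = Tt g a r n" unfolding Suc by (rule Trec[symmetric])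
    finally show ?thesis .
  qed
qed

theorem proposition2p3:
  fixes g :: "'l \<Rightarrow> 'l \<Rightarrow> ('l \<Rightarrow>\<^sub>0 'k::comm_ring_1)"
    and a :: "'l \<Rightarrow>\<^sub>0 'k"
    and n :: nat
  assumes "rat_algebra TYPE('k)"
    and "\<And>x y. g x y = g y x"
    and "\<And>x y z. zprod g (zprod g (Poly_Mapping.single x 1) (Poly_Mapping.single y 1)) (Poly_Mapping.single z 1)
               = zprod g (Poly_Mapping.single x 1) (zprod g (Poly_Mapping.single y 1) (Poly_Mapping.single z 1))"
    and "n \<ge> 1"
  shows "Sr (\<lambda>x y. liftc (g x y)) [:0, 1:] (ncpow (zemb (liftc a)) n)
       = (\<Sum>i = 0..n. ncsmult ([:0, 1:] ^ (n - i) * (1 - [:0, 1:]) ^ i)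
            (harm (\<lambda>x y. liftc (g x y)) (ncpow (zemb (liftc a)) i)
                  (Sr (\<lambda>x y. liftc (g x y)) 1 (ncpow (zemb (liftc a)) (n - i)))))"
proof -
  have e: "Sr (\<lambda>x y. liftc (g x y)) [:0, 1:] (ncpow (zemb (liftc a)) n) = Tt (\<lambda>x y. liftc (g x y)) (liftc a) [:0, 1:] n"
    by (rule main_gen)
  show ?thesis unfolding e Tt_def Hh_def ncsmult_sm atLeast0AtMost ..
qed

end
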